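(* Let $s\ge3$ and let $S$ be a sequence over an alphabet of $n$ symbols, written as a concatenation of $m$ blocks, containing no alternation of length $s+2$. Let $2\le\hat m<m$ and partition the blocks of $S$ into $\hat m$ consecutive intervals $S_1S_2\cdots S_{\hat m}$, where $S_q$ consists of $m_q\ge1$ blocks ($\sum_q m_q=m$). For each $q$ let $\check n_q$ be the number of symbols occurring in $S_q$ and in no other interval, and let $\hat n=n-\sum_q\check n_q$. Then \[ |S|\le \sum_{q=1}^{\hat m}\lambda_s(\check n_q,m_q)+2\lambda_{s-1}(\hat n,m)+\lambda_{s-2}\big(\lambda_s(\hat n,\hat m)-2\hat n,\,m\big). \] Consequently $\lambda_s(n,m)$ is at most the maximum of the right-hand side over all nonnegative integers $\hat n,\check n_1,\dots,\check n_{\hat m}$ summing to $n$.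
   Context: For $s\ge1$, a sequence contains an alternation of length $s+2$ if there are distinct symbols $a\ne b$ and indices $i_1<\dots<i_{s+2}$ whose entries are alternately $a,b,a,b,\dots$. A block is a sequence of pairwise distinct symbols. $\lambda_s(n,m)$ is the maximum length of a sequence using at most $n$ distinct symbols that contains no alternation of length $s+2$ and can be written as a concatenation of at most $m$ blocks; by convention $\lambda_s(0,m)=0$. *)

theory Defs
  imports Main
begin

definition has_alternation :: "nat \<Rightarrow> 'a list \<Rightarrow> bool" where
  "has_alternation k S \<longleftrightarrow>
     (\<exists>a b (i :: nat \<Rightarrow> nat). a \<noteq> b \<and>
        (\<forall>j<k. i j < length S) \<and>
        (\<forall>j. Suc j < k \<longrightarrow> i j < i (Suc j)) \<and>
        (\<forall>j<k. S ! (i j) = (if even j then a else b)))"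

definition is_block :: "'a list \<Rightarrow> bool" where
  "is_block b \<longleftrightarrow> distinct b"

definition at_most_blocks :: "nat \<Rightarrow> 'a list \<Rightarrow> bool" where
  "at_most_blocks m S \<longleftrightarrow>
     (\<exists>bs. length bs \<le> m \<and> concat bs = S \<and> (\<forall>b\<in>set bs. is_block b))"

text \<open>The set of
admissible lengths is nonempty (empty sequence) and bounded by n*m, so the
supremum is a maximum; for n = 0 it is 0.\<close>
definition lambda_s :: "nat \<Rightarrow> nat \<Rightarrow> nat \<Rightarrow> nat" where
  "lambda_s s n m = Sup {length S | S :: nat list.
       card (set S) \<le> n \<and> \<not> has_alternation (s + 2) S \<and> at_most_blocks m S}"

end

theory Submission
  imports Defs "HOL-Library.Sublist"
begin



fun alt :: "'a \<Rightarrow> 'a \<Rightarrow> nat \<Rightarrow> 'a list" where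
  "alt a b 0 = []" | "alt a b (Suc k) = a # alt b a k"

lemma length_alt[simp]: "length (alt a b k) = k"
  by (induct k arbitrary: a b) auto

lemma alt_snoc: "alt a b k @ [if even k then a else b] = alt a b (Suc k)"
  by (induct k arbitrary: a b) auto

lemma map_alt: "map f (alt a b k) = alt (f a) (f b) k"
  by (induct k arbitrary: a b) auto

lemma nth_alt: "j < k \<Longrightarrow> alt a b k ! j = (if even j then a else b)"
  by (induct k arbitrary: a b j) (auto simp: nth_Cons split: nat.splits)

definition altp :: "nat \<Rightarrow> 'a \<Rightarrow> 'a \<Rightarrow> 'a list \<Rightarrow> bool" where
  "altp k a b S \<longleftrightarrow> (\<exists>i :: nat \<Rightarrow> nat.
        (\<forall>j<k. i j < length S) \<and>
        (\<forall>j. Suc j < k \<longrightarrow> i j < i (Suc j)) \<and>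
        (\<forall>j<k. S ! (i j) = (if even j then a else b)))"

lemma mono_chain: "(\<forall>j. Suc j < k \<longrightarrow> i j < (i (Suc j)::nat)) \<Longrightarrow> j < k \<Longrightarrow> i 0 \<le> i j"
proof (induct j)
  case (Suc j) thus ?case by (metis Suc_lessD le_less_trans less_imp_le_nat)
qed simp

lemma nth_Cons_pos: "0 < p \<Longrightarrow> S ! (p - 1) = (x#S) ! p"
  by (cases p) auto

lemma altp_Nil: "altp k a b [] \<longleftrightarrow> k = 0"
  unfolding altp_def by auto

lemma altp_Cons: "altp (Suc k) a b (x # S) \<longleftrightarrow> (a = x \<and> altp k b a S) \<or> altp (Suc k) a b S"
proof
  assume "altp (Suc k) a b (x # S)"
  then obtain i where b0: "\<forall>j<Suc k. i j < length (x#S)" and m: "\<forall>j. Suc j < Suc k \<longrightarrow> i j < i (Suc j)"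
    and v: "\<forall>j<Suc k. (x#S) ! (i j) = (if even j then a else b)" unfolding altp_def by blast
  have b: "\<forall>j<Suc k. i j < Suc (length S)" using b0 by simp
  show "(a = x \<and> altp k b a S) \<or> altp (Suc k) a b S"
  proof (cases "i 0 = 0")
    case True
    have "(x#S) ! (i 0) = a" using v by (metis even_zero zero_less_Suc)
    hence ax: "a = x" using True by simp
    have pos: "\<And>j. j<k \<Longrightarrow> i (Suc j) > 0"
    proof -
      fix j assume "j < k"
      hence "i j < i (Suc j)" using m by simp
      thus "i (Suc j) > 0" by simp
    qed
    have "altp k b a S" unfolding altp_def
    proof (intro exI[of _ "\<lambda>j. i (Suc j) - 1"] conjI allI impI)
      fix j assume j: "j < k"
      have "i (Suc j) < Suc (length S)" using b j by simp
      thus "i (Suc j) - 1 < length S" using pos[OF j] by linarith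
    next
      fix j assume j: "Suc j < k"
      have "i (Suc j) < i (Suc (Suc j))" using m j by simp
      thus "i (Suc j) - 1 < i (Suc (Suc j)) - 1" using pos[of j] j by linarith
    next
      fix j assume j: "j < k"
      have "S ! (i (Suc j) - 1) = (x#S) ! (i (Suc j))" using pos[OF j]
        by (simp add: nth_Cons_pos)
      also have "\<dots> = (if even (Suc j) then a else b)" using v j by simp
      finally show "S ! (i (Suc j) - 1) = (if even j then b else a)" by simp
    qed
    thus ?thesis using ax by blast
  next
    case False
    have pos: "\<And>j. j<Suc k \<Longrightarrow> i j > 0"
    proof -
      fix j assume "j < Suc k"
      hence "i 0 \<le> i j" by (rule mono_chain[OF m])
      thus "i j > 0" using False by linarith
    qed
    have "altp (Suc k) a b S" unfolding altp_def
    proof (intro exI[of _ "\<lambda>j. i j - 1"] conjI allI impI)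
      fix j assume j: "j < Suc k"
      have "i j < Suc (length S)" using b j by simp
      thus "i j - 1 < length S" using pos[OF j] by linarith
    next
      fix j assume j: "Suc j < Suc k"
      have "i j < i (Suc j)" using m j by simp
      thus "i j - 1 < i (Suc j) - 1" using pos[of j] j by linarith
    next
      fix j assume j: "j < Suc k"
      have "S ! (i j - 1) = (x#S) ! (i j)" using pos[OF j]
        by (simp add: nth_Cons_pos)
      also have "\<dots> = (if even j then a else b)" using v j by simp
      finally show "S ! (i j - 1) = (if even j then a else b)" .
    qed
    thus ?thesis by blast
  qed
next
  assume "(a = x \<and> altp k b a S) \<or> altp (Suc k) a b S"
  thus "altp (Suc k) a b (x # S)"
  proof
    assume "a = x \<and> altp k b a S"
    then obtain i where ax: "a = x" and b: "\<forall>j<k. i j < length S" and m: "\<forall>j. Suc j < k \<longrightarrow> i j < i (Suc j)"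
      and v: "\<forall>j<k. S ! (i j) = (if even j then b else a)" unfolding altp_def by blast
    show ?thesis unfolding altp_def
    proof (intro exI[of _ "\<lambda>j. case j of 0 \<Rightarrow> 0 | Suc j' \<Rightarrow> Suc (i j')"] conjI allI impI)
      fix j assume "j < Suc k" thus "(case j of 0 \<Rightarrow> 0 | Suc j' \<Rightarrow> Suc (i j')) < length (x#S)"
        using b by (cases j) auto
    next
      fix j assume "Suc j < Suc k" thus "(case j of 0 \<Rightarrow> 0 | Suc j' \<Rightarrow> Suc (i j')) < (case Suc j of 0 \<Rightarrow> 0 | Suc j' \<Rightarrow> Suc (i j'))"
        using m by (cases j) auto
    next
      fix j assume "j < Suc k" thus "(x#S) ! (case j of 0 \<Rightarrow> 0 | Suc j' \<Rightarrow> Suc (i j')) = (if even j then a else b)"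
        using v ax by (cases j) auto
    qed
  next
    assume "altp (Suc k) a b S"
    then obtain i where b: "\<forall>j<Suc k. i j < length S" and m: "\<forall>j. Suc j < Suc k \<longrightarrow> i j < i (Suc j)"
      and v: "\<forall>j<Suc k. S ! (i j) = (if even j then a else b)" unfolding altp_def by blast
    show ?thesis unfolding altp_def
    proof (intro exI[of _ "\<lambda>j. Suc (i j)"] conjI allI impI)
      fix j assume "j<Suc k" thus "Suc (i j) < length (x#S)" using b by simp
    next
      fix j assume "Suc j < Suc k" thus "Suc (i j) < Suc (i (Suc j))" using m by simp
    next
      fix j assume "j < Suc k" thus "(x#S) ! Suc (i j) = (if even j then a else b)" using v by simp
    qed
  qed
qed

lemma altp_subseq: "altp k a b S \<longleftrightarrow> subseq (alt a b k) S"
proof (induct S arbitrary: k a b)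
  case Nil thus ?case by (cases k) (auto simp: altp_Nil)
next
  case (Cons x S)
  show ?case
  proof (cases k)
    case 0 thus ?thesis unfolding altp_def by auto
  next
    case (Suc k')
    have e1: "alt a b k = a # alt b a k'" using Suc by simp
    have "subseq (alt a b k) (x#S) \<longleftrightarrow> (a = x \<and> subseq (alt b a k') S) \<or> subseq (alt a b k) S"
    proof (cases "a = x")
      case True
      then have "subseq (alt a b k) (x#S) \<longleftrightarrow> subseq (alt b a k') S" using e1 by simp
      moreover have "subseq (alt a b k) S \<Longrightarrow> subseq (alt b a k') S" using e1 subseq_Cons' by metis
      ultimately show ?thesis using True by blast
    next
      case False thus ?thesis using e1 by simp
    qed
    moreover have "altp k a b (x#S) \<longleftrightarrow> (a = x \<and> altp k' b a S) \<or> altp k a b S" using Suc altp_Cons by simp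
    ultimately show ?thesis using Cons.hyps by simp
  qed
qed

lemma has_alt_altp: "has_alternation k S \<longleftrightarrow> (\<exists>a b. a \<noteq> b \<and> altp k a b S)"
  unfolding has_alternation_def altp_def by simp

lemma has_alt_subseq: "has_alternation k S \<longleftrightarrow> (\<exists>a b. a \<noteq> b \<and> subseq (alt a b k) S)"
  unfolding has_alt_altp altp_subseq ..

lemma has_alt_mono: "has_alternation k T \<Longrightarrow> subseq T S \<Longrightarrow> has_alternation k S"
proof -
  assume "has_alternation k T" "subseq T S"
  then obtain a b where "a \<noteq> b" "subseq (alt a b k) T" unfolding has_alt_subseq by blast
  hence "subseq (alt a b k) S" using \<open>subseq T S\<close> subseq_order.trans by blast
  thus ?thesis using \<open>a \<noteq> b\<close> unfolding has_alt_subseq by blast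
qed

lemma subseq_map_ex: "subseq xs (map f ys) \<Longrightarrow> \<exists>zs. subseq zs ys \<and> xs = map f zs"
proof (induct ys arbitrary: xs)
  case Nil thus ?case by auto
next
  case (Cons y ys)
  note IH = Cons.hyps and P = Cons.prems
  show ?case
  proof (cases xs)
    case Nil thus ?thesis by auto
  next
    case (Cons x xs')
    note xs = this
    show ?thesis
    proof (cases "x = f y")
      case True
      with P xs have "subseq xs' (map f ys)" by simp
      then obtain zs where "subseq zs ys" "xs' = map f zs" using IH by blast
      thus ?thesis using True xs by (intro exI[of _ "y # zs"]) auto
    next
      case False
      with P xs have "subseq xs (map f ys)" by simp
      then obtain zs where "subseq zs ys" "xs = map f zs" using IH by blast
      thus ?thesis by (intro exI[of _ zs]) auto
    qed
  qed
qed

lemma subseq_set: "subseq xs ys \<Longrightarrow> set xs \<subseteq> set ys"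
  by (induct rule: list_emb.induct) auto

lemma sorted_subseq: "subseq xs ys \<Longrightarrow> sorted ys \<Longrightarrow> sorted xs"
proof (induct rule: list_emb.induct)
  case (list_emb_Cons2 x y xs ys)
  have "set xs \<subseteq> set ys" using list_emb_Cons2(2) by (rule subseq_set)
  thus ?case using list_emb_Cons2 by auto
next
  case (list_emb_Cons xs ys y)
  thus ?case by simp
qed simp




lemma set_alt: "set (alt a b k) \<subseteq> {a,b}"
  by (induct k arbitrary: a b) auto

lemma has_alt_map_inj:
  assumes h: "has_alternation k (map f S)" and inj: "inj_on f (set S)" and k: "2 \<le> k"
  shows "has_alternation k S"
proof -
  obtain a b where ab: "a \<noteq> b" and sub: "subseq (alt a b k) (map f S)" using h unfolding has_alt_subseq by blast
  obtain zs where zs: "subseq zs S" "alt a b k = map f zs" using subseq_map_ex[OF sub] by blast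
  have "length (alt a b k) = length (map f zs)" using zs(2) by (rule arg_cong)
  hence "k = length zs" by (simp only: length_alt length_map)
  hence lz: "length zs = k" by (rule sym)
  have setz: "set zs \<subseteq> set S" using zs(1) by (rule subseq_set)
  define a' where "a' = zs ! 0"
  define b' where "b' = zs ! 1"
  have fz: "\<And>j. j < k \<Longrightarrow> f (zs ! j) = (if even j then a else b)"
  proof -
    fix j assume j: "j < k"
    have "f (zs ! j) = map f zs ! j" using j lz by simp
    also have "\<dots> = alt a b k ! j" using zs(2) by simp
    finally show "f (zs ! j) = (if even j then a else b)" using j by (simp add: nth_alt)
  qed
  have fa: "f a' = a" using fz[of 0] k unfolding a'_def by simp
  have fb: "f b' = b" using fz[of 1] k unfolding b'_def by simp
  have "a' \<in> set zs" using k lz unfolding a'_def by simp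
  hence a'S: "a' \<in> set S" using setz by blast
  have "b' \<in> set zs" using k lz unfolding b'_def by simp
  hence b'S: "b' \<in> set S" using setz by blast
  have "zs = alt a' b' k"
  proof (rule nth_equalityI)
    show "length zs = length (alt a' b' k)" using lz by simp
  next
    fix j assume j: "j < length zs"
    have zjS: "zs ! j \<in> set S" using j setz by (meson nth_mem subsetD)
    have "f (zs ! j) = f (if even j then a' else b')" using fz[of j] j lz fa fb by simp
    hence "zs ! j = (if even j then a' else b')" using inj zjS a'S b'S
      by (simp add: inj_on_def) 
    thus "zs ! j = alt a' b' k ! j" using j lz by (simp add: nth_alt)
  qed
  moreover have "a' \<noteq> b'" using fa fb ab by blast
  ultimately show ?thesis using zs(1) unfolding has_alt_subseq by blast
qed

lemma blocks_bound:
  assumes "at_most_blocks m S" "card (set S) \<le> n"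
  shows "length S \<le> m * n"
proof -
  obtain bs where bs: "length bs \<le> m" "concat bs = S" "\<forall>b\<in>set bs. distinct b"
    using assms(1) unfolding at_most_blocks_def is_block_def by blast
  have "\<And>b. b \<in> set bs \<Longrightarrow> length b \<le> n"
  proof -
    fix b assume b: "b \<in> set bs"
    have "length b = card (set b)" using bs(3) b by (simp add: distinct_card)
    also have "\<dots> \<le> card (set S)" using b bs(2) by (intro card_mono) auto
    finally show "length b \<le> n" using assms(2) by simp
  qed
  hence "sum_list (map length bs) \<le> sum_list (map (\<lambda>_. n) bs)" by (intro sum_list_mono) auto
  also have "\<dots> = length bs * n" by (simp add: sum_list_triv)
  also have "\<dots> \<le> m * n" using bs(1) by simp
  finally show ?thesis using bs(2) by (metis length_concat)
qed

lemma len_le_lambda: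
  fixes S :: "'b list"
  assumes c: "card (set S) \<le> n" and na: "\<not> has_alternation (s+2) S" and bl: "at_most_blocks m S"
  shows "length S \<le> lambda_s s n m"
proof -
  obtain f :: "'b \<Rightarrow> nat" where inj: "inj_on f (set S)"
    using finite_imp_inj_to_nat_seg[of "set S"] by auto
  define T where "T = map f S"
  have cT: "card (set T) \<le> n" unfolding T_def using c inj by (simp add: card_image)
  have naT: "\<not> has_alternation (s+2) T"
  proof
    assume "has_alternation (s+2) T"
    hence "has_alternation (s+2) S" unfolding T_def using inj by (rule has_alt_map_inj) simp
    thus False using na by contradiction
  qed
  obtain bs where bs: "length bs \<le> m" "concat bs = S" "\<forall>b\<in>set bs. is_block b"
    using bl unfolding at_most_blocks_def by blast
  have "at_most_blocks m T" unfolding at_most_blocks_def T_def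
  proof (intro exI[of _ "map (map f) bs"] conjI ballI)
    show "length (map (map f) bs) \<le> m" using bs by simp
    show "concat (map (map f) bs) = map f S" using bs(2) map_concat by metis
  next
    fix b assume "b \<in> set (map (map f) bs)"
    then obtain b0 where b0: "b0 \<in> set bs" "b = map f b0" by auto
    have "set b0 \<subseteq> set S" using b0 bs by auto
    hence "inj_on f (set b0)" using inj inj_on_subset by blast
    thus "is_block b" using b0 bs unfolding is_block_def by (simp add: distinct_map)
  qed
  hence mem: "length T \<in> {length S | S :: nat list.
       card (set S) \<le> n \<and> \<not> has_alternation (s + 2) S \<and> at_most_blocks m S}"
    using cT naT by blast
  have "bdd_above {length S | S :: nat list.
       card (set S) \<le> n \<and> \<not> has_alternation (s + 2) S \<and> at_most_blocks m S}"
  proof (rule bdd_aboveI[of _ "m * n"])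
    fix x assume "x \<in> {length S | S :: nat list.
       card (set S) \<le> n \<and> \<not> has_alternation (s + 2) S \<and> at_most_blocks m S}"
    then obtain S' :: "nat list" where "x = length S'" "card (set S') \<le> n" "at_most_blocks m S'" by blast
    thus "x \<le> m * n" using blocks_bound by metis
  qed
  hence "length T \<le> lambda_s s n m" unfolding lambda_s_def using mem by (rule cSup_upper[rotated])
  thus ?thesis unfolding T_def by simp
qed

lemma no_alt_Nil: "0 < k \<Longrightarrow> \<not> has_alternation k []"
  unfolding has_alt_subseq by (cases k) auto

lemma lambda_attained:
  "\<exists>S :: nat list. card (set S) \<le> n \<and> \<not> has_alternation (s+2) S \<and> at_most_blocks m S
      \<and> length S = lambda_s s n m"
proof -
  define X where "X = {length S | S :: nat list.
       card (set S) \<le> n \<and> \<not> has_alternation (s + 2) S \<and> at_most_blocks m S}"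
  have "at_most_blocks m ([]::nat list)" unfolding at_most_blocks_def by (intro exI[of _ "[]"]) simp
  moreover have "\<not> has_alternation (s+2) ([]::nat list)" by (rule no_alt_Nil) simp
  ultimately have "length ([]::nat list) \<in> X" unfolding X_def by fastforce
  hence "0 \<in> X" by simp
  hence ne: "X \<noteq> {}" by blast
  have "X \<subseteq> {..m*n}"
  proof
    fix x assume "x \<in> X"
    then obtain S' :: "nat list" where "x = length S'" "card (set S') \<le> n" "at_most_blocks m S'" unfolding X_def by blast
    thus "x \<in> {..m*n}" using blocks_bound by fastforce
  qed
  hence fin: "finite X" by (rule finite_subset) simp
  have "Sup X = Max X" using fin ne by (rule cSup_eq_Max)
  hence "Sup X \<in> X" using fin ne Max_in by simp
  thus ?thesis unfolding X_def lambda_s_def by auto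
qed

lemma pad_blocks:
  assumes "at_most_blocks m S"
  shows "\<exists>bs. length bs = m \<and> concat bs = S \<and> (\<forall>b\<in>set bs. distinct b)"
proof -
  obtain bs where bs: "length bs \<le> m" "concat bs = S" "\<forall>b\<in>set bs. is_block b"
    using assms unfolding at_most_blocks_def by blast
  show ?thesis
    by (rule exI[of _ "bs @ replicate (m - length bs) []"]) (use bs in \<open>auto simp: is_block_def\<close>)
qed

lemma alt4: "alt a b (Suc (Suc (Suc (Suc r)))) = [a,b,a,b] @ alt a b r"
  by simp

lemma wrap_aux:
  assumes "subseq (x # y # zs) (T @ [c])" "c \<notin> set T" "y = c" "zs \<noteq> []"
  shows False
proof -
  obtain xs1 xs2 where x: "x # y # zs = xs1 @ xs2" "subseq xs1 T" "subseq xs2 [c]"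
    using assms(1) by (rule subseq_appendE)
  have "length xs2 \<le> 1" using list_emb_length[OF x(3)] by simp
  moreover have "length (x # y # zs) = length xs1 + length xs2" using x(1) by simp
  moreover have "length (x # y # zs) \<ge> 3" using assms(4) by (cases zs) auto
  ultimately have l1: "1 < length xs1" by linarith
  have "(x # y # zs) ! 1 = xs1 ! 1" using x(1) l1 by (simp add: nth_append)
  hence "y \<in> set xs1" using l1 by simp
  hence "y \<in> set T" using subseq_set[OF x(2)] by blast
  thus False using assms by blast
qed

lemma cwrap:
  assumes c: "c \<notin> set T" and k: "4 \<le> k" and h: "has_alternation k (c # T @ [c])"
  shows "has_alternation k T"
proof -
  obtain a b where ab: "a \<noteq> b" and sub: "subseq (alt a b k) (c # T @ [c])" using h unfolding has_alt_subseq by blast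
  define r where "r = k - 4"
  have kr: "k = Suc (Suc (Suc (Suc r)))" unfolding r_def using k by arith
  have sub4: "subseq [a,b,a,b] (c # T @ [c])"
    using sub unfolding kr alt4 by (meson subseq_order.trans prefix_imp_subseq prefixI)
  show ?thesis
  proof (cases "c = a \<or> c = b")
    case True
    show ?thesis
    proof (cases "c = a")
      case True
      have e: "[a,b,a,b] = c # [b,c,b]" using True by simp
      have "subseq (c # [b,c,b]) (c # (T @ [c]))" using sub4 unfolding e .
      hence "subseq [b,c,b] (T @ [c])" by (rule subseq_Cons2')
      hence False using wrap_aux[of b c "[b]" T c] c by blast
      thus ?thesis ..
    next
      case False
      hence cb: "c = b" using True by blast
      have e: "[a,b,a,b] = a # [c,a,c]" using cb by simp
      have s2: "subseq (a # [c,a,c]) (c # (T @ [c]))" using sub4 unfolding e .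
      have "a \<noteq> c" using ab cb by simp
      hence "subseq (a # [c,a,c]) (T @ [c])" using subseq_Cons2_neq[OF s2] by blast
      hence False using wrap_aux[of a c "[a,c]" T c] c by blast
      thus ?thesis ..
    qed
  next
    case False
    have "subseq (filter (\<lambda>z. z \<noteq> c) (alt a b k)) (filter (\<lambda>z. z \<noteq> c) (c # T @ [c]))"
      using sub by (rule subseq_filter)
    moreover have "filter (\<lambda>z. z \<noteq> c) (alt a b k) = alt a b k"
      using set_alt[of a b k] False by (intro filter_True) auto
    moreover have "filter (\<lambda>z. z \<noteq> c) (c # T @ [c]) = T" using c by (simp add: filter_id_conv) blast
    ultimately show ?thesis using ab unfolding has_alt_subseq by auto
  qed
qed

lemma lambda_step:
  assumes m: "2 \<le> m" and s: "2 \<le> s"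
  shows "lambda_s s n m + 2 \<le> lambda_s s (Suc n) m"
proof -
  obtain S0 :: "nat list" where S0: "card (set S0) \<le> n" "\<not> has_alternation (s+2) S0" "at_most_blocks m S0"
      "length S0 = lambda_s s n m" using lambda_attained by blast
  define c where "c = Suc (Max (insert 0 (set S0)))"
  have c: "c \<notin> set S0" unfolding c_def using Max_ge[of "insert 0 (set S0)"] by fastforce
  obtain bs where bs: "length bs = m" "concat bs = S0" "\<forall>b\<in>set bs. distinct b"
    using pad_blocks[OF S0(3)] by blast
  obtain b1 rest where br: "bs = b1 # rest" using bs(1) m by (cases bs) auto
  have "rest \<noteq> []" using bs(1) m br by auto
  then obtain mid bl where rm: "rest = mid @ [bl]" by (metis rev_exhaust)
  define S1 where "S1 = c # S0 @ [c]"
  have blk: "at_most_blocks m S1" unfolding at_most_blocks_def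
  proof (intro exI[of _ "(c # b1) # mid @ [bl @ [c]]"] conjI ballI)
    show "length ((c # b1) # mid @ [bl @ [c]]) \<le> m" using bs(1) br rm by simp
    show "concat ((c # b1) # mid @ [bl @ [c]]) = S1" unfolding S1_def using bs(2) br rm by simp
  next
    fix b assume "b \<in> set ((c # b1) # mid @ [bl @ [c]])"
    thus "is_block b" unfolding is_block_def using bs(2,3) br rm c by auto
  qed
  have "card (set S1) \<le> Suc n" unfolding S1_def using S0(1) c
    by (simp add: card_insert_if)
  moreover have "\<not> has_alternation (s+2) S1" unfolding S1_def using cwrap[OF c _] S0(2) s by auto
  ultimately have "length S1 \<le> lambda_s s (Suc n) m" using blk len_le_lambda by blast
  thus ?thesis unfolding S1_def using S0(4) by simp
qed

lemma lambda_steps: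
  assumes m: "2 \<le> m" and s: "2 \<le> s"
  shows "lambda_s s g m + 2 * d \<le> lambda_s s (g + d) m"
proof (induct d)
  case (Suc d)
  thus ?case using lambda_step[OF m s, of "g + d"] by simp
qed simp




lemma cc: "concat (map concat xss) = concat (concat xss)"
  by (induct xss) auto

lemma sl: "sum_list (map f [0..<n]) = (\<Sum>q<n. f q)"
  by (induct n) auto

lemma subseq_concat_mem: "xs \<in> set xss \<Longrightarrow> subseq xs (concat xss)"
proof -
  assume "xs \<in> set xss"
  then obtain us vs where "xss = us @ xs # vs" by (meson split_list)
  hence "concat xss = concat us @ xs @ concat vs" by simp
  moreover have "subseq xs (concat us @ xs @ concat vs)"
    by (rule subseq_drop_many, rule subseq_rev_drop_many, rule subseq_order.order_refl)
  ultimately show ?thesis by simp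
qed

lemma subseq_remdups: "subseq (remdups xs) xs"
proof (induct xs)
  case (Cons x xs)
  show ?case
  proof (cases "x \<in> set xs")
    case True
    hence "remdups (x # xs) = remdups xs" by simp
    thus ?thesis using Cons list_emb_Cons by metis
  next
    case False
    hence "remdups (x # xs) = x # remdups xs" by simp
    thus ?thesis using Cons subseq_Cons2 by metis
  qed
qed simp

lemma subseq_concat_map: "(\<And>q. q \<in> set qs \<Longrightarrow> subseq (f q) (g q)) \<Longrightarrow> subseq (concat (map f qs)) (concat (map g qs))"
proof (induct qs)
  case (Cons q qs)
  have "subseq (f q @ concat (map f qs)) (g q @ concat (map g qs))"
    using Cons by (intro list_emb_append_mono) auto
  thus ?case by simp
qed simp

lemma cover4: "(\<forall>p\<in>set xs. P1 p \<or> P2 p \<or> P3 p \<or> P4 p) \<Longrightarrow>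
   length xs \<le> length (filter P1 xs) + length (filter P2 xs) + length (filter P3 xs) + length (filter P4 xs)"
  by (induct xs) auto

context fixes Bs :: "'a list list list" begin

definition "Iv q = concat (Bs ! q)"
definition "Sq q = map (\<lambda>x. (x,q)) (Iv q)"
definition "Sp = concat (map Sq [0..<length Bs])"
definition "Lt q = concat (map Sq [0..<q])"
definition "Gt q = concat (map Sq [Suc q..<length Bs])"
definition "Ix x = {q. q < length Bs \<and> x \<in> set (Iv q)}"
definition "Loc q = {x. x \<in> set (concat (Bs ! q)) \<and> (\<forall>r<length Bs. r \<noteq> q \<longrightarrow> x \<notin> set (concat (Bs ! r)))}"
definition "Glob = {x. \<exists>q<length Bs. \<exists>r<length Bs. q \<noteq> r \<and> x \<in> set (Iv q) \<and> x \<in> set (Iv r)}"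
definition "BSp = concat (map (\<lambda>q. map (map (\<lambda>x. (x,q))) (Bs ! q)) [0..<length Bs])"
definition "Pf p \<longleftrightarrow> fst p \<in> Glob \<and> snd p = Min (Ix (fst p))"
definition "Pl p \<longleftrightarrow> fst p \<in> Glob \<and> snd p = Max (Ix (fst p))"
definition "Pm p \<longleftrightarrow> fst p \<in> Glob \<and> Min (Ix (fst p)) < snd p \<and> snd p < Max (Ix (fst p))"
definition "Ploc p \<longleftrightarrow> fst p \<in> Loc (snd p)"

lemma S_eq: "concat (map Iv [0..<length Bs]) = concat (concat Bs)"
proof -
  have "map Iv [0..<length Bs] = map concat Bs" unfolding Iv_def by (rule nth_equalityI) auto
  thus ?thesis by (simp add: cc)
qed

lemma map_fst_Sp: "map fst Sp = concat (concat Bs)"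
proof -
  have "map fst Sp = concat (map (\<lambda>q. map fst (Sq q)) [0..<length Bs])"
    unfolding Sp_def by (simp add: map_concat comp_def)
  also have "\<dots> = concat (map Iv [0..<length Bs])" unfolding Sq_def by (simp add: comp_def)
  finally show ?thesis using S_eq by simp
qed

lemma set_Sp: "p \<in> set Sp \<longleftrightarrow> snd p < length Bs \<and> fst p \<in> set (Iv (snd p))"
  unfolding Sp_def Sq_def by (cases p) auto

lemma Sp_split: "q < length Bs \<Longrightarrow> Sp = Lt q @ Sq q @ Gt q"
proof -
  assume q: "q < length Bs"
  have "[0..<length Bs] = [0..<q] @ [q..<length Bs]"
    using upt_add_eq_append[of 0 q "length Bs - q"] q by simp
  also have "[q..<length Bs] = q # [Suc q..<length Bs]" using q by (rule upt_conv_Cons)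
  finally show ?thesis unfolding Sp_def Lt_def Gt_def by simp
qed

lemma Lt_snd: "p \<in> set (Lt q) \<Longrightarrow> snd p < q" unfolding Lt_def Sq_def by auto
lemma Gt_snd: "p \<in> set (Gt q) \<Longrightarrow> snd p > q" unfolding Gt_def Sq_def by auto
lemma Sq_snd: "p \<in> set (Sq q) \<Longrightarrow> snd p = q" unfolding Sq_def by auto
lemma in_Lt: "p \<in> set Sp \<Longrightarrow> snd p < q \<Longrightarrow> p \<in> set (Lt q)"
  unfolding set_Sp Lt_def Sq_def by (cases p) auto
lemma in_Gt: "p \<in> set Sp \<Longrightarrow> q < snd p \<Longrightarrow> p \<in> set (Gt q)"
  unfolding set_Sp Gt_def Sq_def by (cases p) auto

lemma sorted_aux: "sorted (map snd (concat (map Sq [0..<k])))"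
proof (induct k)
  case (Suc k)
  have 1: "\<And>y a b. y < k \<Longrightarrow> (a, b) \<in> set (Sq y) \<Longrightarrow> b \<le> k" unfolding Sq_def by auto
  have 2: "\<forall>p\<in>set (Sq k). snd p = k" unfolding Sq_def by auto
  have "map snd (Sq k) = replicate (length (Iv k)) k" unfolding Sq_def
    by (simp add: comp_def map_replicate_const)
  hence 3: "sorted (map snd (Sq k))" by simp
  show ?case using Suc 1 2 3 by (auto simp: sorted_append)
qed simp

lemma sorted_Sp: "sorted (map snd Sp)"
  unfolding Sp_def by (rule sorted_aux)

lemma sub_Sq:
  assumes L: "subseq L Sp" and all: "\<forall>p\<in>set L. snd p = q" and q: "q < length Bs"
  shows "subseq L (Sq q)"
proof -
  have "subseq (filter (\<lambda>p. snd p = q) L) (filter (\<lambda>p. snd p = q) Sp)" using L by (rule subseq_filter)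
  moreover have "filter (\<lambda>p. snd p = q) L = L" using all by (simp add: filter_id_conv)
  moreover have "filter (\<lambda>p. snd p = q) Sp = Sq q"
  proof -
    have "filter (\<lambda>p. snd p = q) (Lt q) = []" using Lt_snd by (force simp: filter_empty_conv)
    moreover have "filter (\<lambda>p. snd p = q) (Gt q) = []" using Gt_snd by (force simp: filter_empty_conv)
    moreover have "filter (\<lambda>p. snd p = q) (Sq q) = Sq q" using Sq_snd by (simp add: filter_id_conv)
    ultimately show ?thesis using Sp_split[OF q] by simp
  qed
  ultimately show ?thesis by simp
qed

lemma transfer:
  assumes "q < length Bs" "subseq P1 (Lt q)" "subseq L (Sq q)" "subseq P2 (Gt q)"
  shows "subseq (P1 @ L @ P2) Sp"
proof -
  have "subseq (P1 @ (L @ P2)) (Lt q @ (Sq q @ Gt q))"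
    using assms by (intro list_emb_append_mono) auto
  thus ?thesis using Sp_split[OF assms(1)] by simp
qed

lemma Ix_fin: "finite (Ix x)" unfolding Ix_def by simp

lemma Glob_Ix:
  assumes "x \<in> Glob"
  shows "Ix x \<noteq> {}" "Min (Ix x) < Max (Ix x)"
proof -
  obtain q r where qr: "q < length Bs" "r < length Bs" "q \<noteq> r" "x \<in> set (Iv q)" "x \<in> set (Iv r)"
    using assms unfolding Glob_def by blast
  have qi: "q \<in> Ix x" and ri: "r \<in> Ix x" using qr unfolding Ix_def by auto
  thus "Ix x \<noteq> {}" by blast
  have "Min (Ix x) \<le> min q r" using qi ri Ix_fin by simp
  moreover have "max q r \<le> Max (Ix x)" using qi ri Ix_fin by simp
  ultimately show "Min (Ix x) < Max (Ix x)" using qr(3) by linarith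
qed

lemma Min_Ix: "x \<in> Glob \<Longrightarrow> (x, Min (Ix x)) \<in> set Sp"
  using Min_in[OF Ix_fin Glob_Ix(1)] unfolding set_Sp Ix_def by auto
lemma Max_Ix: "x \<in> Glob \<Longrightarrow> (x, Max (Ix x)) \<in> set Sp"
  using Max_in[OF Ix_fin Glob_Ix(1)] unfolding set_Sp Ix_def by auto

lemma Min_Ix_lt: "x \<in> Glob \<Longrightarrow> Min (Ix x) < length Bs"
  using Min_in[OF Ix_fin Glob_Ix(1)] unfolding Ix_def by auto

end



context fixes Bs :: "'a list list list" begin

lemma alt_nth_fst:
  assumes "alt a b k = map fst L" "j < k"
  shows "fst (L ! j) = (if even j then a else b)"
proof -
  have lk: "length L = k" using arg_cong[OF assms(1), of length] by simp
  have "fst (L ! j) = map fst L ! j" using assms(2) lk by simp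
  also have "\<dots> = alt a b k ! j" using assms(1) by simp
  finally show ?thesis using assms(2) by (simp add: nth_alt)
qed

lemma first_noalt:
  assumes k: "3 \<le> k" and h: "has_alternation k (map fst (filter (Pf Bs) (Sp Bs)))"
  shows "has_alternation (Suc k) (concat (concat Bs))"
proof -
  obtain a b where ab: "a \<noteq> b" and sub: "subseq (alt a b k) (map fst (filter (Pf Bs) (Sp Bs)))"
    using h unfolding has_alt_subseq by blast
  obtain L where L: "subseq L (filter (Pf Bs) (Sp Bs))" "alt a b k = map fst L"
    using subseq_map_ex[OF sub] by blast
  have LSp: "subseq L (Sp Bs)" using L(1) subseq_filter_left subseq_order.trans by blast
  have LP: "\<forall>p\<in>set L. Pf Bs p" using subseq_set[OF L(1)] by auto
  have lenL: "length L = k" using arg_cong[OF L(2), of length] by simp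
  have sortL: "sorted (map snd L)" using sorted_subseq[OF subseq_map[OF LSp] sorted_Sp] .
  have f0: "fst (L!0) = a" using alt_nth_fst[OF L(2), of 0] k by simp
  have f1: "fst (L!1) = b" using alt_nth_fst[OF L(2), of 1] k by simp
  have f2: "fst (L!2) = a" using alt_nth_fst[OF L(2), of 2] k by simp
  have P0: "Pf Bs (L!0)" using LP lenL k by simp
  have P1: "Pf Bs (L!1)" using LP lenL k by simp
  have P2: "Pf Bs (L!2)" using LP lenL k by simp
  have "map snd L ! 0 \<le> map snd L ! 1" using sortL lenL k by (intro sorted_nth_mono) auto
  hence le1: "snd (L!0) \<le> snd (L!1)" using lenL k by simp
  have "map snd L ! 1 \<le> map snd L ! 2" using sortL lenL k by (intro sorted_nth_mono) auto
  hence le2: "snd (L!1) \<le> snd (L!2)" using lenL k by simp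
  define q where "q = Min (Ix Bs a)"
  have s0: "snd (L!0) = q" using P0 f0 unfolding Pf_def q_def by simp
  have s2: "snd (L!2) = q" using P2 f2 unfolding Pf_def q_def by simp
  have s1: "snd (L!1) = Min (Ix Bs b)" using P1 f1 unfolding Pf_def by simp
  have qb: "Min (Ix Bs b) = q" using le1 le2 s0 s1 s2 by linarith
  have aG: "a \<in> Glob Bs" using P0 f0 unfolding Pf_def by simp
  have bG: "b \<in> Glob Bs" using P1 f1 unfolding Pf_def by simp
  have allq: "\<forall>p\<in>set L. snd p = q"
  proof
    fix p assume p: "p \<in> set L"
    have "fst p \<in> set (map fst L)" using p by simp
    hence "fst p \<in> {a, b}" using L(2) set_alt[of a b k] by auto
    moreover have "snd p = Min (Ix Bs (fst p))" using LP p unfolding Pf_def by simp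
    ultimately show "snd p = q" using qb q_def by auto
  qed
  have qm: "q < length Bs" unfolding q_def using Min_Ix_lt[OF aG] .
  define z where "z = (if even k then a else b)"
  have zG: "z \<in> Glob Bs" using aG bG unfolding z_def by simp
  have zq: "Min (Ix Bs z) = q" using qb unfolding z_def q_def by simp
  define r where "r = Max (Ix Bs z)"
  have rq: "q < r" using Glob_Ix(2)[OF zG] zq unfolding r_def by simp
  have zr: "(z, r) \<in> set (Sp Bs)" unfolding r_def using Max_Ix[OF zG] .
  have "subseq [(z, r)] (Gt Bs q)" using in_Gt[OF zr] rq subseq_singleton_left by fastforce
  moreover have "subseq L (Sq Bs q)" using sub_Sq[OF LSp allq qm] .
  moreover have "subseq [] (Lt Bs q)" by simp
  ultimately have "subseq ([] @ L @ [(z, r)]) (Sp Bs)" using transfer[OF qm] by blast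
  hence "subseq (map fst (L @ [(z, r)])) (map fst (Sp Bs))" using subseq_map by fastforce
  hence s': "subseq (map fst (L @ [(z, r)])) (concat (concat Bs))" unfolding map_fst_Sp .
  have eq: "map fst (L @ [(z, r)]) = alt a b (Suc k)" using L(2) unfolding z_def alt_snoc[symmetric] by simp
  have "subseq (alt a b (Suc k)) (concat (concat Bs))" using s' unfolding eq .
  thus ?thesis using ab unfolding has_alt_subseq by blast
qed

lemma last_noalt:
  assumes k: "3 \<le> k" and h: "has_alternation k (map fst (filter (Pl Bs) (Sp Bs)))"
  shows "has_alternation (Suc k) (concat (concat Bs))"
proof -
  obtain a b where ab: "a \<noteq> b" and sub: "subseq (alt a b k) (map fst (filter (Pl Bs) (Sp Bs)))"
    using h unfolding has_alt_subseq by blast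
  obtain L where L: "subseq L (filter (Pl Bs) (Sp Bs))" "alt a b k = map fst L"
    using subseq_map_ex[OF sub] by blast
  have LSp: "subseq L (Sp Bs)" using L(1) subseq_filter_left subseq_order.trans by blast
  have LP: "\<forall>p\<in>set L. Pl Bs p" using subseq_set[OF L(1)] by auto
  have lenL: "length L = k" using arg_cong[OF L(2), of length] by simp
  have sortL: "sorted (map snd L)" using sorted_subseq[OF subseq_map[OF LSp] sorted_Sp] .
  have f0: "fst (L!0) = a" using alt_nth_fst[OF L(2), of 0] k by simp
  have f1: "fst (L!1) = b" using alt_nth_fst[OF L(2), of 1] k by simp
  have f2: "fst (L!2) = a" using alt_nth_fst[OF L(2), of 2] k by simp
  have P0: "Pl Bs (L!0)" using LP lenL k by simp
  have P1: "Pl Bs (L!1)" using LP lenL k by simp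
  have P2: "Pl Bs (L!2)" using LP lenL k by simp
  have "map snd L ! 0 \<le> map snd L ! 1" using sortL lenL k by (intro sorted_nth_mono) auto
  hence le1: "snd (L!0) \<le> snd (L!1)" using lenL k by simp
  have "map snd L ! 1 \<le> map snd L ! 2" using sortL lenL k by (intro sorted_nth_mono) auto
  hence le2: "snd (L!1) \<le> snd (L!2)" using lenL k by simp
  define q where "q = Max (Ix Bs a)"
  have s0: "snd (L!0) = q" using P0 f0 unfolding Pl_def q_def by simp
  have s2: "snd (L!2) = q" using P2 f2 unfolding Pl_def q_def by simp
  have s1: "snd (L!1) = Max (Ix Bs b)" using P1 f1 unfolding Pl_def by simp
  have qb: "Max (Ix Bs b) = q" using le1 le2 s0 s1 s2 by linarith
  have aG: "a \<in> Glob Bs" using P0 f0 unfolding Pl_def by simp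
  have bG: "b \<in> Glob Bs" using P1 f1 unfolding Pl_def by simp
  have allq: "\<forall>p\<in>set L. snd p = q"
  proof
    fix p assume p: "p \<in> set L"
    have "fst p \<in> set (map fst L)" using p by simp
    hence "fst p \<in> {a, b}" using L(2) set_alt[of a b k] by auto
    moreover have "snd p = Max (Ix Bs (fst p))" using LP p unfolding Pl_def by simp
    ultimately show "snd p = q" using qb q_def by auto
  qed
  have qm: "q < length Bs" unfolding q_def
    using Max_Ix[OF aG] unfolding set_Sp by simp
  define r where "r = Min (Ix Bs b)"
  have rq: "r < q" using Glob_Ix(2)[OF bG] qb unfolding r_def by simp
  have br: "(b, r) \<in> set (Sp Bs)" unfolding r_def using Min_Ix[OF bG] .
  have "subseq [(b, r)] (Lt Bs q)" using in_Lt[OF br] rq subseq_singleton_left by fastforce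
  moreover have "subseq L (Sq Bs q)" using sub_Sq[OF LSp allq qm] .
  moreover have "subseq [] (Gt Bs q)" by simp
  ultimately have "subseq ([(b, r)] @ L @ []) (Sp Bs)" using transfer[OF qm] by blast
  hence "subseq ([(b, r)] @ L) (Sp Bs)" by (simp only: append_Nil2)
  hence "subseq (map fst ([(b, r)] @ L)) (map fst (Sp Bs))" by (rule subseq_map)
  hence s': "subseq (map fst ([(b, r)] @ L)) (concat (concat Bs))" unfolding map_fst_Sp .
  have eq: "map fst ([(b, r)] @ L) = alt b a (Suc k)" using L(2) by simp
  have "subseq (alt b a (Suc k)) (concat (concat Bs))" using s' unfolding eq .
  moreover have "b \<noteq> a" using ab by simp
  ultimately show ?thesis unfolding has_alt_subseq by blast
qed

lemma mid_noalt:
  assumes k: "3 \<le> k" and h: "has_alternation k (filter (Pm Bs) (Sp Bs))"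
  shows "has_alternation (Suc (Suc k)) (concat (concat Bs))"
proof -
  obtain pa pb where ab: "pa \<noteq> pb" and L: "subseq (alt pa pb k) (filter (Pm Bs) (Sp Bs))"
    using h unfolding has_alt_subseq by blast
  define L where "L = alt pa pb k"
  have LSp: "subseq L (Sp Bs)" using L subseq_filter_left subseq_order.trans unfolding L_def by blast
  have LP: "\<forall>p\<in>set L. Pm Bs p" using subseq_set[OF L] unfolding L_def by auto
  have lenL: "length L = k" unfolding L_def by simp
  have sortL: "sorted (map snd L)" using sorted_subseq[OF subseq_map[OF LSp] sorted_Sp] .
  have l0: "L!0 = pa" "L!1 = pb" "L!2 = pa" unfolding L_def using k by (simp_all add: nth_alt)
  have "map snd L ! 0 \<le> map snd L ! 1" using sortL lenL k by (intro sorted_nth_mono) auto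
  hence le1: "snd pa \<le> snd pb" using lenL k l0 by simp
  have "map snd L ! 1 \<le> map snd L ! 2" using sortL lenL k by (intro sorted_nth_mono) auto
  hence le2: "snd pb \<le> snd pa" using lenL k l0 by simp
  define q where "q = snd pa"
  have qb: "snd pb = q" using le1 le2 q_def by simp
  define a where "a = fst pa"
  define b where "b = fst pb"
  have pa: "pa = (a, q)" unfolding a_def q_def by simp
  have pb: "pb = (b, q)" unfolding b_def using qb by (cases pb) simp
  have ab': "a \<noteq> b" using ab pa pb by auto
  have allq: "\<forall>p\<in>set L. snd p = q" using set_alt[of pa pb k] qb q_def unfolding L_def by auto
  have mL: "map fst L = alt a b k" unfolding L_def map_alt a_def b_def ..
  have "L ! 0 \<in> set L" using lenL k by simp
  hence paL: "pa \<in> set L" using l0 by simp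
  have "L ! 1 \<in> set L" using lenL k by simp
  hence pbL: "pb \<in> set L" using l0 by simp
  have Ppa: "Pm Bs pa" using LP paL by blast
  have Ppb: "Pm Bs pb" using LP pbL by blast
  have "pa \<in> set (Sp Bs)" using subseq_set[OF LSp] paL by blast
  hence qm: "q < length Bs" unfolding set_Sp q_def by simp
  have bG: "b \<in> Glob Bs" using Ppb pb unfolding Pm_def by simp
  define r where "r = Min (Ix Bs b)"
  have rq: "r < q" using Ppb pb unfolding Pm_def r_def by simp
  have br: "(b, r) \<in> set (Sp Bs)" unfolding r_def using Min_Ix[OF bG] .
  define z where "z = (if even k then a else b)"
  have zG: "z \<in> Glob Bs" and qz: "q < Max (Ix Bs z)"
    using Ppa Ppb pa pb unfolding z_def Pm_def by auto
  define r' where "r' = Max (Ix Bs z)"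
  have zr: "(z, r') \<in> set (Sp Bs)" unfolding r'_def using Max_Ix[OF zG] .
  have "subseq [(b, r)] (Lt Bs q)" using in_Lt[OF br] rq subseq_singleton_left by fastforce
  moreover have "subseq L (Sq Bs q)" using sub_Sq[OF LSp allq qm] .
  moreover have "subseq [(z, r')] (Gt Bs q)" using in_Gt[OF zr] qz subseq_singleton_left unfolding r'_def by fastforce
  ultimately have "subseq ([(b, r)] @ L @ [(z, r')]) (Sp Bs)" using transfer[OF qm] by blast
  hence "subseq (map fst ([(b, r)] @ L @ [(z, r')])) (map fst (Sp Bs))" using subseq_map by fastforce
  hence s': "subseq (map fst ([(b, r)] @ L @ [(z, r')])) (concat (concat Bs))" unfolding map_fst_Sp .
  have e1: "alt a b k @ [z] = alt a b (Suc k)" unfolding z_def by (rule alt_snoc)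
  have "map fst ([(b, r)] @ L @ [(z, r')]) = b # (alt a b k @ [z])" using mL by simp
  also have "\<dots> = alt b a (Suc (Suc k))" unfolding e1 by simp
  finally have eq: "map fst ([(b, r)] @ L @ [(z, r')]) = alt b a (Suc (Suc k))" .
  have "subseq (alt b a (Suc (Suc k))) (concat (concat Bs))" using s' unfolding eq .
  moreover have "b \<noteq> a" using ab' by simp
  ultimately show ?thesis unfolding has_alt_subseq by blast
qed

end



lemma dfilt: "distinct (map f xs) \<Longrightarrow> distinct (map f (filter P xs))"
  by (induct xs) auto

lemma len_filter_remdups: "length (filter P (remdups xs)) = card {x \<in> set xs. P x}"
proof -
  have "length (filter P (remdups xs)) = card (set (filter P (remdups xs)))"
    by (rule distinct_card[symmetric]) simp
  also have "set (filter P (remdups xs)) = {x \<in> set xs. P x}" by auto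
  finally show ?thesis .
qed

context fixes Bs :: "'a list list list" begin

lemma BSp_concat: "concat (BSp Bs) = Sp Bs"
  unfolding BSp_def Sp_def Sq_def Iv_def by (simp add: cc[symmetric] map_concat comp_def)

lemma BSp_len: "length (BSp Bs) = (\<Sum>q<length Bs. length (Bs!q))"
  unfolding BSp_def by (simp add: length_concat comp_def sl)

lemma BSp_dist:
  assumes blocks: "\<forall>I\<in>set Bs. \<forall>b\<in>set I. is_block b"
  shows "\<forall>b\<in>set (BSp Bs). distinct (map fst b)"
proof
  fix b assume "b \<in> set (BSp Bs)"
  then obtain q b0 where q: "q < length Bs" "b0 \<in> set (Bs!q)" "b = map (\<lambda>x. (x,q)) b0"
    unfolding BSp_def by auto
  have "distinct b0" using blocks q(1,2) nth_mem unfolding is_block_def by blast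
  thus "distinct (map fst b)" using q(3) by (simp add: comp_def)
qed

lemma blocks_fst:
  assumes blocks: "\<forall>I\<in>set Bs. \<forall>b\<in>set I. is_block b" and m: "(\<Sum>q<length Bs. length (Bs!q)) = m"
  shows "at_most_blocks m (map fst (filter P (Sp Bs)))"
  unfolding at_most_blocks_def
proof (intro exI[of _ "map (\<lambda>b. map fst (filter P b)) (BSp Bs)"] conjI ballI)
  show "length (map (\<lambda>b. map fst (filter P b)) (BSp Bs)) \<le> m" using BSp_len m by simp
  have "map fst (filter P (concat (BSp Bs))) = concat (map (\<lambda>b. map fst (filter P b)) (BSp Bs))"
    by (simp add: filter_concat map_concat comp_def)
  thus "concat (map (\<lambda>b. map fst (filter P b)) (BSp Bs)) = map fst (filter P (Sp Bs))"
    using BSp_concat by simp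
next
  fix b assume "b \<in> set (map (\<lambda>b. map fst (filter P b)) (BSp Bs))"
  then obtain b0 where "b0 \<in> set (BSp Bs)" "b = map fst (filter P b0)" by auto
  thus "is_block b" unfolding is_block_def using BSp_dist[OF blocks] dfilt by blast
qed

lemma blocks_pair:
  assumes blocks: "\<forall>I\<in>set Bs. \<forall>b\<in>set I. is_block b" and m: "(\<Sum>q<length Bs. length (Bs!q)) = m"
  shows "at_most_blocks m (filter P (Sp Bs))"
  unfolding at_most_blocks_def
proof (intro exI[of _ "map (filter P) (BSp Bs)"] conjI ballI)
  show "length (map (filter P) (BSp Bs)) \<le> m" using BSp_len m by simp
  show "concat (map (filter P) (BSp Bs)) = filter P (Sp Bs)"
    by (metis BSp_concat filter_concat)
next
  fix b assume "b \<in> set (map (filter P) (BSp Bs))"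
  then obtain b0 where b0: "b0 \<in> set (BSp Bs)" "b = filter P b0" by auto
  have "distinct b0" using BSp_dist[OF blocks] b0(1) distinct_map by blast
  thus "is_block b" unfolding is_block_def using b0 by simp
qed

lemma subseq_Iv: "q < length Bs \<Longrightarrow> subseq (Iv Bs q) (concat (concat Bs))"
proof -
  assume q: "q < length Bs"
  have "Iv Bs q \<in> set (map concat Bs)" unfolding Iv_def using q by simp
  hence "subseq (Iv Bs q) (concat (map concat Bs))" by (rule subseq_concat_mem)
  thus ?thesis by (simp only: cc)
qed

lemma inS: "q < length Bs \<Longrightarrow> x \<in> set (Iv Bs q) \<Longrightarrow> x \<in> set (concat (concat Bs))"
  using subseq_set[OF subseq_Iv] by blast

lemma loc_len:
  assumes blocks: "\<forall>I\<in>set Bs. \<forall>b\<in>set I. is_block b"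
    and noalt: "\<not> has_alternation (s+2) (concat (concat Bs))" and q: "q < length Bs"
  shows "length (filter (\<lambda>x. x \<in> Loc Bs q) (Iv Bs q)) \<le> lambda_s s (card (Loc Bs q)) (length (Bs!q))"
proof (rule len_le_lambda)
  have "finite (Loc Bs q)" unfolding Loc_def by simp
  moreover have "set (filter (\<lambda>x. x \<in> Loc Bs q) (Iv Bs q)) \<subseteq> Loc Bs q" by auto
  ultimately show "card (set (filter (\<lambda>x. x \<in> Loc Bs q) (Iv Bs q))) \<le> card (Loc Bs q)"
    by (rule card_mono)
  show "\<not> has_alternation (s + 2) (filter (\<lambda>x. x \<in> Loc Bs q) (Iv Bs q))"
  proof
    assume "has_alternation (s + 2) (filter (\<lambda>x. x \<in> Loc Bs q) (Iv Bs q))"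
    moreover have "subseq (filter (\<lambda>x. x \<in> Loc Bs q) (Iv Bs q)) (concat (concat Bs))"
      using subseq_filter_left subseq_Iv[OF q] subseq_order.trans by blast
    ultimately show False using noalt has_alt_mono by blast
  qed
  show "at_most_blocks (length (Bs!q)) (filter (\<lambda>x. x \<in> Loc Bs q) (Iv Bs q))"
    unfolding at_most_blocks_def
  proof (intro exI[of _ "map (filter (\<lambda>x. x \<in> Loc Bs q)) (Bs!q)"] conjI ballI)
    show "length (map (filter (\<lambda>x. x \<in> Loc Bs q)) (Bs!q)) \<le> length (Bs!q)" by simp
    show "concat (map (filter (\<lambda>x. x \<in> Loc Bs q)) (Bs!q)) = filter (\<lambda>x. x \<in> Loc Bs q) (Iv Bs q)"
      unfolding Iv_def by (simp add: filter_concat)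
  next
    fix b assume "b \<in> set (map (filter (\<lambda>x. x \<in> Loc Bs q)) (Bs!q))"
    then obtain b0 where b0: "b0 \<in> set (Bs!q)" "b = filter (\<lambda>x. x \<in> Loc Bs q) b0" by auto
    have "distinct b0" using blocks b0(1) q nth_mem unfolding is_block_def by blast
    thus "is_block b" unfolding is_block_def using b0 by simp
  qed
qed

lemma loc_sum: "length (filter (Ploc Bs) (Sp Bs)) = (\<Sum>q<length Bs. length (filter (\<lambda>x. x \<in> Loc Bs q) (Iv Bs q)))"
proof -
  have "length (filter (Ploc Bs) (Sp Bs)) = sum_list (map (\<lambda>q. length (filter (Ploc Bs) (Sq Bs q))) [0..<length Bs])"
    unfolding Sp_def by (simp add: filter_concat length_concat comp_def)
  also have "\<dots> = sum_list (map (\<lambda>q. length (filter (\<lambda>x. x \<in> Loc Bs q) (Iv Bs q))) [0..<length Bs])"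
    unfolding Sq_def Ploc_def by (simp add: filter_map comp_def)
  finally show ?thesis by (simp add: sl)
qed

lemma covers: "\<forall>p\<in>set (Sp Bs). Ploc Bs p \<or> Pf Bs p \<or> Pl Bs p \<or> Pm Bs p"
proof
  fix p assume p: "p \<in> set (Sp Bs)"
  obtain x q where pxq: "p = (x, q)" by (cases p)
  have q: "q < length Bs" and xq: "x \<in> set (Iv Bs q)" using p pxq unfolding set_Sp by auto
  show "Ploc Bs p \<or> Pf Bs p \<or> Pl Bs p \<or> Pm Bs p"
  proof (cases "x \<in> Loc Bs q")
    case True thus ?thesis unfolding Ploc_def pxq by simp
  next
    case False
    then obtain r where r: "r < length Bs" "r \<noteq> q" "x \<in> set (Iv Bs r)"
      using xq unfolding Loc_def Iv_def by auto
    have G: "x \<in> Glob Bs" unfolding Glob_def using q r xq by blast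
    have qI: "q \<in> Ix Bs x" unfolding Ix_def using q xq by simp
    have "Min (Ix Bs x) \<le> q" by (rule Min_le[OF Ix_fin qI])
    moreover have "q \<le> Max (Ix Bs x)" by (rule Max_ge[OF Ix_fin qI])
    ultimately have "q = Min (Ix Bs x) \<or> q = Max (Ix Bs x) \<or> (Min (Ix Bs x) < q \<and> q < Max (Ix Bs x))"
      by linarith
    thus ?thesis using G unfolding Pf_def Pl_def Pm_def pxq by auto
  qed
qed

lemma Glob_sub: "Glob Bs \<subseteq> set (concat (concat Bs))"
  unfolding Glob_def using inS by blast

lemma Glob_fin: "finite (Glob Bs)"
  using Glob_sub by (rule finite_subset) simp

lemma glob_count:
  assumes A: "finite A" "set (concat (concat Bs)) \<subseteq> A"
  shows "card (Glob Bs) + (\<Sum>q<length Bs. card (Loc Bs q)) \<le> card A"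
proof -
  define U where "U = (\<Union>q\<in>{..<length Bs}. Loc Bs q)"
  have finL: "\<forall>q\<in>{..<length Bs}. finite (Loc Bs q)" unfolding Loc_def by simp
  have disj: "\<forall>q\<in>{..<length Bs}. \<forall>r\<in>{..<length Bs}. q \<noteq> r \<longrightarrow> Loc Bs q \<inter> Loc Bs r = {}"
    unfolding Loc_def by auto
  have cU: "card U = (\<Sum>q<length Bs. card (Loc Bs q))" unfolding U_def
    using card_UN_disjoint[OF _ finL disj] by simp
  have finU: "finite U" unfolding U_def using finL by simp
  have GU: "Glob Bs \<inter> U = {}"
  proof (rule ccontr)
    assume "Glob Bs \<inter> U \<noteq> {}"
    then obtain x where xG: "x \<in> Glob Bs" and xU: "x \<in> U" by blast
    obtain q where q: "q < length Bs" "x \<in> Loc Bs q" using xU unfolding U_def by auto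
    obtain q1 r1 where qr: "q1 < length Bs" "r1 < length Bs" "q1 \<noteq> r1" "x \<in> set (Iv Bs q1)" "x \<in> set (Iv Bs r1)"
      using xG unfolding Glob_def by blast
    have "q1 = q" using q qr unfolding Loc_def Iv_def by blast
    moreover have "r1 = q" using q qr unfolding Loc_def Iv_def by blast
    ultimately show False using qr(3) by simp
  qed
  have "Glob Bs \<union> U \<subseteq> A"
  proof -
    have "U \<subseteq> set (concat (concat Bs))" unfolding U_def Loc_def using inS unfolding Iv_def by blast
    thus ?thesis using Glob_sub A(2) by blast
  qed
  hence "card (Glob Bs \<union> U) \<le> card A" using A(1) by (rule card_mono[rotated])
  moreover have "card (Glob Bs \<union> U) = card (Glob Bs) + card U"
    using Glob_fin finU GU by (rule card_Un_disjoint)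
  ultimately show ?thesis using cU by simp
qed

lemma mid_set: "set (filter (Pm Bs) (Sp Bs)) = Sigma (Glob Bs) (\<lambda>x. Ix Bs x - {Min (Ix Bs x), Max (Ix Bs x)})"
proof (intro set_eqI iffI)
  fix p assume "p \<in> set (filter (Pm Bs) (Sp Bs))"
  hence p: "p \<in> set (Sp Bs)" "Pm Bs p" by auto
  obtain x q where pxq: "p = (x, q)" by (cases p)
  have "q \<in> Ix Bs x" using p(1) pxq unfolding set_Sp Ix_def by simp
  thus "p \<in> Sigma (Glob Bs) (\<lambda>x. Ix Bs x - {Min (Ix Bs x), Max (Ix Bs x)})"
    using p(2) pxq unfolding Pm_def by auto
next
  fix p assume "p \<in> Sigma (Glob Bs) (\<lambda>x. Ix Bs x - {Min (Ix Bs x), Max (Ix Bs x)})"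
  then obtain x q where pxq: "p = (x, q)" and xG: "x \<in> Glob Bs" and qI: "q \<in> Ix Bs x"
    and qn: "q \<noteq> Min (Ix Bs x)" "q \<noteq> Max (Ix Bs x)" by auto
  have "Min (Ix Bs x) \<le> q" by (rule Min_le[OF Ix_fin qI])
  moreover have "q \<le> Max (Ix Bs x)" by (rule Max_ge[OF Ix_fin qI])
  ultimately have "Pm Bs p" using xG qn unfolding Pm_def pxq by auto
  moreover have "p \<in> set (Sp Bs)" using qI unfolding pxq set_Sp Ix_def by simp
  ultimately show "p \<in> set (filter (Pm Bs) (Sp Bs))" by simp
qed

lemma mid_card: "card (set (filter (Pm Bs) (Sp Bs))) = (\<Sum>x\<in>Glob Bs. card (Ix Bs x) - 2)"
proof -
  have "card (set (filter (Pm Bs) (Sp Bs))) = (\<Sum>x\<in>Glob Bs. card (Ix Bs x - {Min (Ix Bs x), Max (Ix Bs x)}))"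
    unfolding mid_set by (rule card_SigmaI[OF Glob_fin]) (simp add: Ix_fin)
  also have "\<dots> = (\<Sum>x\<in>Glob Bs. card (Ix Bs x) - 2)"
  proof (rule sum.cong[OF refl])
    fix x assume xG: "x \<in> Glob Bs"
    have ne: "Ix Bs x \<noteq> {}" and lt: "Min (Ix Bs x) < Max (Ix Bs x)" using Glob_Ix[OF xG] by auto
    have sub: "{Min (Ix Bs x), Max (Ix Bs x)} \<subseteq> Ix Bs x" using Min_in[OF Ix_fin ne] Max_in[OF Ix_fin ne] by simp
    have "card {Min (Ix Bs x), Max (Ix Bs x)} = 2" using lt by simp
    thus "card (Ix Bs x - {Min (Ix Bs x), Max (Ix Bs x)}) = card (Ix Bs x) - 2"
      using card_Diff_subset[OF _ sub] by simp
  qed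
  finally show ?thesis .
qed

lemma Ix_ge2: "x \<in> Glob Bs \<Longrightarrow> 2 \<le> card (Ix Bs x)"
proof -
  assume xG: "x \<in> Glob Bs"
  have ne: "Ix Bs x \<noteq> {}" and lt: "Min (Ix Bs x) < Max (Ix Bs x)" using Glob_Ix[OF xG] by auto
  have sub: "{Min (Ix Bs x), Max (Ix Bs x)} \<subseteq> Ix Bs x" using Min_in[OF Ix_fin ne] Max_in[OF Ix_fin ne] by simp
  have "card {Min (Ix Bs x), Max (Ix Bs x)} = 2" using lt by simp
  thus ?thesis using card_mono[OF Ix_fin sub] by simp
qed

definition "Cq = concat (map (\<lambda>q. filter (\<lambda>x. x \<in> Glob Bs) (remdups (Iv Bs q))) [0..<length Bs])"

lemma Cq_sub: "subseq Cq (concat (concat Bs))"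
proof -
  have "subseq Cq (concat (map (Iv Bs) [0..<length Bs]))" unfolding Cq_def
  proof (rule subseq_concat_map)
    fix q
    show "subseq (filter (\<lambda>x. x \<in> Glob Bs) (remdups (Iv Bs q))) (Iv Bs q)"
      using subseq_filter_left subseq_remdups subseq_order.trans by blast
  qed
  thus ?thesis unfolding S_eq .
qed

lemma Cq_set: "set Cq \<subseteq> Glob Bs" unfolding Cq_def by auto

lemma Cq_blocks: "at_most_blocks (length Bs) Cq"
  unfolding at_most_blocks_def Cq_def
  by (intro exI[of _ "map (\<lambda>q. filter (\<lambda>x. x \<in> Glob Bs) (remdups (Iv Bs q))) [0..<length Bs]"])
     (auto simp: is_block_def)

lemma Cq_len: "length Cq = (\<Sum>x\<in>Glob Bs. card (Ix Bs x))"
proof -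
  have "length Cq = (\<Sum>q<length Bs. card {x \<in> set (Iv Bs q). x \<in> Glob Bs})"
    unfolding Cq_def by (simp add: length_concat comp_def len_filter_remdups sl)
  also have "\<dots> = card (Sigma {..<length Bs} (\<lambda>q. {x \<in> set (Iv Bs q). x \<in> Glob Bs}))"
    by (rule card_SigmaI[symmetric]) auto
  also have "\<dots> = card (prod.swap ` Sigma {..<length Bs} (\<lambda>q. {x \<in> set (Iv Bs q). x \<in> Glob Bs}))"
    by (rule card_image[symmetric]) simp
  also have "prod.swap ` Sigma {..<length Bs} (\<lambda>q. {x \<in> set (Iv Bs q). x \<in> Glob Bs}) = Sigma (Glob Bs) (Ix Bs)"
    unfolding Ix_def by force
  also have "card (Sigma (Glob Bs) (Ix Bs)) = (\<Sum>x\<in>Glob Bs. card (Ix Bs x))"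
    by (rule card_SigmaI[OF Glob_fin]) (simp add: Ix_fin)
  finally show ?thesis .
qed

end



fun splitl :: "nat list \<Rightarrow> 'a list \<Rightarrow> 'a list list" where
  "splitl [] xs = []" | "splitl (l # ls) xs = take l xs # splitl ls (drop l xs)"

lemma splitl_len: "length (splitl ls xs) = length ls"
  by (induct ls arbitrary: xs) auto

lemma splitl_concat: "sum_list ls = length xs \<Longrightarrow> concat (splitl ls xs) = xs"
proof (induct ls arbitrary: xs)
  case (Cons l ls)
  have "sum_list ls = length (drop l xs)" using Cons.prems by simp
  hence "concat (splitl ls (drop l xs)) = drop l xs" using Cons.hyps by blast
  thus ?case by simp
qed simp

lemma splitl_nth: "sum_list ls \<le> length xs \<Longrightarrow> q < length ls \<Longrightarrow> length (splitl ls xs ! q) = ls ! q"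
proof (induct ls arbitrary: xs q)
  case (Cons l ls)
  show ?case
  proof (cases q)
    case 0 thus ?thesis using Cons.prems by simp
  next
    case (Suc q')
    have "sum_list ls \<le> length (drop l xs)" using Cons.prems by simp
    moreover have "q' < length ls" using Cons.prems Suc by simp
    ultimately have "length (splitl ls (drop l xs) ! q') = ls ! q'" using Cons.hyps by blast
    thus ?thesis using Suc by simp
  qed
qed simp

lemma splitl_set: "I \<in> set (splitl ls xs) \<Longrightarrow> set I \<subseteq> set xs"
proof (induct ls arbitrary: xs)
  case (Cons l ls)
  show ?case
  proof (cases "I = take l xs")
    case True thus ?thesis by (simp add: set_take_subset)
  next
    case False
    hence "I \<in> set (splitl ls (drop l xs))" using Cons.prems by simp
    hence "set I \<subseteq> set (drop l xs)" using Cons.hyps by blast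
    thus ?thesis using set_drop_subset by fastforce
  qed
qed simp

lemma sum_list_map_nth: "sum_list (map f xs) = (\<Sum>q<length xs. f (xs ! q))"
  by (simp add: sum_list_sum_nth atLeast0LessThan)

lemma part1:
  fixes Bs :: "'a list list list" and A :: "'a set"
  assumes s3: "3 \<le> s" and A: "finite A" "card A = n" "set (concat (concat Bs)) \<subseteq> A"
    and blocks: "\<forall>I\<in>set Bs. \<forall>b\<in>set I. is_block b"
    and m: "(\<Sum>q<length Bs. length (Bs!q)) = m"
    and noalt: "\<not> has_alternation (s+2) (concat (concat Bs))"
    and mh2: "2 \<le> length Bs"
  shows "length (concat (concat Bs)) \<le> (\<Sum>q<length Bs. lambda_s s (card (Loc Bs q)) (length (Bs!q)))
           + 2 * lambda_s (s - 1) (n - (\<Sum>q<length Bs. card (Loc Bs q))) m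
           + lambda_s (s - 2) (lambda_s s (n - (\<Sum>q<length Bs. card (Loc Bs q))) (length Bs)
                 - 2 * (n - (\<Sum>q<length Bs. card (Loc Bs q)))) m
         \<and> (\<Sum>q<length Bs. card (Loc Bs q)) \<le> n"
proof -
  define N where "N = (\<Sum>q<length Bs. card (Loc Bs q))"
  define nh where "nh = n - N"
  define g where "g = card (Glob Bs)"
  have gc: "g + N \<le> n" using glob_count[OF A(1) A(3)] A(2) unfolding g_def N_def by simp
  have gnh: "g \<le> nh" using gc nh_def by simp
  have lS: "length (concat (concat Bs)) = length (Sp Bs)"
    using arg_cong[OF map_fst_Sp[of Bs], of length] by simp
  have len: "length (concat (concat Bs)) \<le> length (filter (Ploc Bs) (Sp Bs)) + length (filter (Pf Bs) (Sp Bs))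
      + length (filter (Pl Bs) (Sp Bs)) + length (filter (Pm Bs) (Sp Bs))"
    unfolding lS by (rule cover4[OF covers])
  have Lloc: "length (filter (Ploc Bs) (Sp Bs)) \<le> (\<Sum>q<length Bs. lambda_s s (card (Loc Bs q)) (length (Bs!q)))"
    unfolding loc_sum by (rule sum_mono) (rule loc_len[OF blocks noalt], simp)
  have e1: "s - 1 + 2 = Suc (Suc s) - 1" using s3 by simp
  have Lf: "length (filter (Pf Bs) (Sp Bs)) \<le> lambda_s (s-1) nh m"
  proof -
    have "length (map fst (filter (Pf Bs) (Sp Bs))) \<le> lambda_s (s-1) nh m"
    proof (rule len_le_lambda)
      have "set (map fst (filter (Pf Bs) (Sp Bs))) \<subseteq> Glob Bs" unfolding Pf_def by auto
      hence "card (set (map fst (filter (Pf Bs) (Sp Bs)))) \<le> g" unfolding g_def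
        by (rule card_mono[OF Glob_fin])
      thus "card (set (map fst (filter (Pf Bs) (Sp Bs)))) \<le> nh" using gnh by simp
      show "\<not> has_alternation (s - 1 + 2) (map fst (filter (Pf Bs) (Sp Bs)))"
      proof
        assume "has_alternation (s - 1 + 2) (map fst (filter (Pf Bs) (Sp Bs)))"
        hence "has_alternation (s + 1) (map fst (filter (Pf Bs) (Sp Bs)))" using s3
          by (metis Suc_eq_plus1 add_2_eq_Suc' le_add_diff_inverse2 le_trans one_le_numeral)
        hence "has_alternation (Suc (s + 1)) (concat (concat Bs))"
          by (rule first_noalt[rotated]) (use s3 in simp)
        thus False using noalt by simp
      qed
      show "at_most_blocks m (map fst (filter (Pf Bs) (Sp Bs)))" by (rule blocks_fst[OF blocks m])
    qed
    thus ?thesis by simp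
  qed
  have Ll: "length (filter (Pl Bs) (Sp Bs)) \<le> lambda_s (s-1) nh m"
  proof -
    have "length (map fst (filter (Pl Bs) (Sp Bs))) \<le> lambda_s (s-1) nh m"
    proof (rule len_le_lambda)
      have "set (map fst (filter (Pl Bs) (Sp Bs))) \<subseteq> Glob Bs" unfolding Pl_def by auto
      hence "card (set (map fst (filter (Pl Bs) (Sp Bs)))) \<le> g" unfolding g_def
        by (rule card_mono[OF Glob_fin])
      thus "card (set (map fst (filter (Pl Bs) (Sp Bs)))) \<le> nh" using gnh by simp
      show "\<not> has_alternation (s - 1 + 2) (map fst (filter (Pl Bs) (Sp Bs)))"
      proof
        assume "has_alternation (s - 1 + 2) (map fst (filter (Pl Bs) (Sp Bs)))"
        hence "has_alternation (s + 1) (map fst (filter (Pl Bs) (Sp Bs)))" using s3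
          by (metis Suc_eq_plus1 add_2_eq_Suc' le_add_diff_inverse2 le_trans one_le_numeral)
        hence "has_alternation (Suc (s + 1)) (concat (concat Bs))"
          by (rule last_noalt[rotated]) (use s3 in simp)
        thus False using noalt by simp
      qed
      show "at_most_blocks m (map fst (filter (Pl Bs) (Sp Bs)))" by (rule blocks_fst[OF blocks m])
    qed
    thus ?thesis by simp
  qed
  have cardM: "card (set (filter (Pm Bs) (Sp Bs))) \<le> lambda_s s nh (length Bs) - 2 * nh"
  proof -
    have "(\<Sum>x\<in>Glob Bs. card (Ix Bs x) - 2) + 2 * g = (\<Sum>x\<in>Glob Bs. card (Ix Bs x) - 2 + 2)"
      unfolding g_def by (simp only: sum.distrib sum_constant) simp
    also have "\<dots> = (\<Sum>x\<in>Glob Bs. card (Ix Bs x))"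
      by (rule sum.cong[OF refl]) (use Ix_ge2 in force)
    finally have c1: "card (set (filter (Pm Bs) (Sp Bs))) + 2 * g = length (Cq Bs)"
      unfolding mid_card Cq_len .
    have c2: "length (Cq Bs) \<le> lambda_s s g (length Bs)"
    proof (rule len_le_lambda)
      show "card (set (Cq Bs)) \<le> g" unfolding g_def by (rule card_mono[OF Glob_fin Cq_set])
      show "\<not> has_alternation (s + 2) (Cq Bs)" using noalt has_alt_mono Cq_sub by blast
      show "at_most_blocks (length Bs) (Cq Bs)" by (rule Cq_blocks)
    qed
    have c3: "lambda_s s g (length Bs) + 2 * (nh - g) \<le> lambda_s s (g + (nh - g)) (length Bs)"
      using lambda_steps[OF mh2, of s g "nh - g"] s3 by simp
    hence c3': "lambda_s s g (length Bs) + 2 * (nh - g) \<le> lambda_s s nh (length Bs)" using gnh by simp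
    show ?thesis using c1 c2 c3' gnh by linarith
  qed
  have Lm: "length (filter (Pm Bs) (Sp Bs)) \<le> lambda_s (s-2) (lambda_s s nh (length Bs) - 2 * nh) m"
  proof (rule len_le_lambda)
    show "card (set (filter (Pm Bs) (Sp Bs))) \<le> lambda_s s nh (length Bs) - 2 * nh" by (rule cardM)
    show "\<not> has_alternation (s - 2 + 2) (filter (Pm Bs) (Sp Bs))"
    proof
      assume h: "has_alternation (s - 2 + 2) (filter (Pm Bs) (Sp Bs))"
      have e2: "s - 2 + 2 = s" using s3 by simp
      have "has_alternation s (filter (Pm Bs) (Sp Bs))" using h unfolding e2 .
      hence "has_alternation (Suc (Suc s)) (concat (concat Bs))"
        by (rule mid_noalt[rotated]) (use s3 in simp)
      thus False using noalt by simp
    qed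
    show "at_most_blocks m (filter (Pm Bs) (Sp Bs))" by (rule blocks_pair[OF blocks m])
  qed
  have "length (concat (concat Bs)) \<le> (\<Sum>q<length Bs. lambda_s s (card (Loc Bs q)) (length (Bs!q)))
           + 2 * lambda_s (s - 1) nh m + lambda_s (s - 2) (lambda_s s nh (length Bs) - 2 * nh) m"
    using len Lloc Lf Ll Lm by linarith
  moreover have "N \<le> n" using gc by simp
  ultimately show ?thesis unfolding nh_def N_def by blast
qed




theorem mainTheorem5:
  fixes s n m :: nat and A :: "'a set" and Bs :: "'a list list list"
  defines "mh \<equiv> length Bs"
  defines "S \<equiv> concat (concat Bs)"
  defines "mq \<equiv> (\<lambda>q. length (Bs ! q))"
  defines "nc \<equiv> (\<lambda>q. card {x. x \<in> set (concat (Bs ! q)) \<and>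
                      (\<forall>r<mh. r \<noteq> q \<longrightarrow> x \<notin> set (concat (Bs ! r)))})"
  defines "nh \<equiv> n - (\<Sum>q<mh. nc q)"
  assumes s3: "s \<ge> 3"
    and alphabet: "finite A" "card A = n" "set S \<subseteq> A"
    and blocks: "\<forall>I\<in>set Bs. \<forall>b\<in>set I. is_block b"
    and mblocks: "(\<Sum>q<mh. mq q) = m"
    and nonempty_intervals: "\<forall>q<mh. mq q \<ge> 1"
    and noalt: "\<not> has_alternation (s + 2) S"
    and mh_bounds: "2 \<le> mh" "mh < m"
  shows "length S \<le> (\<Sum>q<mh. lambda_s s (nc q) (mq q))
           + 2 * lambda_s (s - 1) nh m
           + lambda_s (s - 2) (lambda_s s nh mh - 2 * nh) m
       \<and> (\<exists>nh' :: nat. \<exists>ncs :: nat list. length ncs = mh \<and> nh' + sum_list ncs = n \<and>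
           lambda_s s n m \<le> (\<Sum>q<mh. lambda_s s (ncs ! q) (mq q))
              + 2 * lambda_s (s - 1) nh' m
              + lambda_s (s - 2) (lambda_s s nh' mh - 2 * nh') m)"
proof -
  have ncL: "\<And>q. nc q = card (Loc Bs q)" unfolding nc_def Loc_def mh_def by simp
  have nhL: "nh = n - (\<Sum>q<length Bs. card (Loc Bs q))" unfolding nh_def mh_def ncL by simp
  have mB: "(\<Sum>q<length Bs. length (Bs!q)) = m" using mblocks unfolding mq_def mh_def .
  have P1: "length (concat (concat Bs)) \<le> (\<Sum>q<length Bs. lambda_s s (card (Loc Bs q)) (length (Bs!q)))
           + 2 * lambda_s (s - 1) (n - (\<Sum>q<length Bs. card (Loc Bs q))) m
           + lambda_s (s - 2) (lambda_s s (n - (\<Sum>q<length Bs. card (Loc Bs q))) (length Bs)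
                 - 2 * (n - (\<Sum>q<length Bs. card (Loc Bs q)))) m"
    using part1[OF s3 alphabet(1,2) alphabet(3)[unfolded S_def] blocks mB noalt[unfolded S_def]
        mh_bounds(1)[unfolded mh_def]] by blast
  have part_a: "length S \<le> (\<Sum>q<mh. lambda_s s (nc q) (mq q))
           + 2 * lambda_s (s - 1) nh m
           + lambda_s (s - 2) (lambda_s s nh mh - 2 * nh) m"
    using P1 unfolding S_def mh_def mq_def nhL ncL .
  obtain S0 :: "nat list" where S0: "card (set S0) \<le> n" "\<not> has_alternation (s+2) S0"
      "at_most_blocks m S0" "length S0 = lambda_s s n m"
    using lambda_attained by blast
  obtain bs0 where bs0: "length bs0 = m" "concat bs0 = S0" "\<forall>b\<in>set bs0. distinct b"
    using pad_blocks[OF S0(3)] by blast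
  define ls where "ls = map length Bs"
  have sls: "sum_list ls = m" unfolding ls_def using mB by (simp add: sum_list_map_nth)
  define Bs0 where "Bs0 = splitl ls bs0"
  have lB0: "length Bs0 = mh" unfolding Bs0_def ls_def mh_def by (simp add: splitl_len)
  have lq: "\<And>q. q < mh \<Longrightarrow> length (Bs0 ! q) = mq q"
  proof -
    fix q assume q: "q < mh"
    have "length (Bs0 ! q) = ls ! q" unfolding Bs0_def
      by (rule splitl_nth) (use sls bs0(1) q in \<open>simp_all add: ls_def mh_def\<close>)
    thus "length (Bs0 ! q) = mq q" using q unfolding ls_def mq_def mh_def by simp
  qed
  have cB0: "concat (concat Bs0) = S0" unfolding Bs0_def
    using splitl_concat[of ls bs0] sls bs0(1,2) by simp
  have blk0: "\<forall>I\<in>set Bs0. \<forall>b\<in>set I. is_block b"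
    unfolding is_block_def Bs0_def using splitl_set bs0(3) by blast
  have "infinite (UNIV - set S0)" using Diff_infinite_finite[OF finite_set infinite_UNIV_nat] .
  then obtain C0 :: "nat set" where C0: "finite C0" "card C0 = n - card (set S0)" "C0 \<subseteq> UNIV - set S0"
    using infinite_arbitrarily_large by blast
  define A0 where "A0 = set S0 \<union> C0"
  have fA0: "finite A0" unfolding A0_def using C0 by simp
  have cA0: "card A0 = n" unfolding A0_def using card_Un_disjoint[of "set S0" C0] C0 S0(1) by auto
  have sA0: "set (concat (concat Bs0)) \<subseteq> A0" unfolding cB0 A0_def by blast
  have m0: "(\<Sum>q<length Bs0. length (Bs0!q)) = m"
    unfolding lB0 using lq mblocks by simp
  have na0: "\<not> has_alternation (s+2) (concat (concat Bs0))" unfolding cB0 by (rule S0(2))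
  have mh0: "2 \<le> length Bs0" using lB0 mh_bounds(1) by simp
  note P0 = part1[OF s3 fA0 cA0 sA0 blk0 m0 na0 mh0]
  define ncs where "ncs = map (\<lambda>q. card (Loc Bs0 q)) [0..<mh]"
  define N0 where "N0 = (\<Sum>q<mh. card (Loc Bs0 q))"
  have sncs: "sum_list ncs = N0" unfolding ncs_def N0_def by (simp add: sl)
  have N0n: "N0 \<le> n" using P0 unfolding N0_def lB0 by blast
  have sumeq: "(\<Sum>q<mh. lambda_s s (card (Loc Bs0 q)) (length (Bs0!q))) = (\<Sum>q<mh. lambda_s s (ncs ! q) (mq q))"
    by (rule sum.cong[OF refl]) (simp add: ncs_def lq)
  have "lambda_s s n m \<le> (\<Sum>q<mh. lambda_s s (ncs ! q) (mq q))
              + 2 * lambda_s (s - 1) (n - N0) m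
              + lambda_s (s - 2) (lambda_s s (n - N0) mh - 2 * (n - N0)) m"
    using P0 S0(4) cB0 sumeq unfolding N0_def lB0 by simp
  moreover have "length ncs = mh" unfolding ncs_def by simp
  moreover have "(n - N0) + sum_list ncs = n" using sncs N0n by simp
  ultimately have part_b: "\<exists>nh' :: nat. \<exists>ncs :: nat list. length ncs = mh \<and> nh' + sum_list ncs = n \<and>
           lambda_s s n m \<le> (\<Sum>q<mh. lambda_s s (ncs ! q) (mq q))
              + 2 * lambda_s (s - 1) nh' m
              + lambda_s (s - 2) (lambda_s s nh' mh - 2 * nh') m" by blast
  show ?thesis using part_a part_b by blast
qed



end
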